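(* Let $k\ge 2$ and consider the Maker–Breaker $k$-in-a-row game on the infinite grid $\mathbb Z^2$: the vertex set is $\mathbb Z^2$ and the edges are all sets of $k$ consecutive points on a horizontal, vertical, or diagonal (slope $1$ or $-1$) line, i.e. all sets $\{p+tv: 0\le t\le k-1\}$ with $p\in\mathbb Z^2$ and $v\in\{(1,0),(0,1),(1,1),(1,-1)\}$. If Breaker has a winning pairing strategy for this game, then $k\ge 9$.
   Context: A winning pairing strategy for Breaker on a hypergraph $(V,E)$ is a family of pairwise disjoint 2-element subsets of $V$ such that every edge of $E$ contains at least one of these pairs. *)

theory Defs
  imports Main
begin

definition winning_pairing_strategy :: "'a set \<Rightarrow> 'a set set \<Rightarrow> 'a set set \<Rightarrow> bool" where
  "winning_pairing_strategy V E P \<longleftrightarrow>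
     (\<forall>p\<in>P. p \<subseteq> V \<and> card p = 2) \<and>
     (\<forall>p\<in>P. \<forall>q\<in>P. p \<noteq> q \<longrightarrow> p \<inter> q = {}) \<and>
     (\<forall>e\<in>E. \<exists>p\<in>P. p \<subseteq> e)"

definition breaker_has_pairing_strategy :: "'a set \<Rightarrow> 'a set set \<Rightarrow> bool" where
  "breaker_has_pairing_strategy V E \<longleftrightarrow> (\<exists>P. winning_pairing_strategy V E P)"

definition kdirs :: "(int \<times> int) set" where
  "kdirs = {(1,0), (0,1), (1,1), (1,-1)}"

definition k_in_a_row_edges :: "nat \<Rightarrow> (int \<times> int) set set" where
  "k_in_a_row_edges k =
     {{(fst p + t * fst v, snd p + t * snd v) | t. 0 \<le> t \<and> t \<le> int k - 1} | p v. v \<in> kdirs}"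

end

theory Submission
  imports Defs
begin

definition lineK :: "nat \<Rightarrow> int \<times> int \<Rightarrow> int \<times> int \<Rightarrow> (int \<times> int) set" where
  "lineK k p v = {(fst p + t * fst v, snd p + t * snd v) | t. 0 \<le> t \<and> t \<le> int k - 1}"

lemma lineK_edge: "v \<in> kdirs \<Longrightarrow> lineK k p v \<in> k_in_a_row_edges k"
  unfolding lineK_def k_in_a_row_edges_def by blast

lemma key_dir:
  fixes s u :: int
  assumes "v \<in> kdirs" "w \<in> kdirs" "s \<noteq> 0"
    and "s * fst v = u * fst w" "s * snd v = u * snd w"
  shows "v = w \<and> u = s"
  using assms unfolding kdirs_def by auto

lemma card_kdirs: "card kdirs = 4"
  unfolding kdirs_def by simp

lemma finite_kdirs: "finite kdirs"
  unfolding kdirs_def by simp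

lemma kdirs_bound: "v \<in> kdirs \<Longrightarrow> 0 \<le> fst v \<and> fst v \<le> 1 \<and> -1 \<le> snd v \<and> snd v \<le> 1"
  unfolding kdirs_def by auto

lemma fiber_bound:
  fixes k :: nat and q :: "(int\<times>int) set" and D :: "((int\<times>int)\<times>(int\<times>int)) set"
  assumes q2: "card q = 2" and finD: "finite D"
    and sub: "\<And>x. x \<in> D \<Longrightarrow> snd x \<in> kdirs \<and> q \<subseteq> lineK k (fst x) (snd x)"
  shows "card D \<le> k - 1"
proof (cases "D = {}")
  case True then show ?thesis by simp
next
  case False
  then obtain x0 where x0: "x0 \<in> D" by blast
  obtain p0 v0 where x0e: "x0 = (p0, v0)" by (cases x0)
  have v0: "v0 \<in> kdirs" and ql: "q \<subseteq> lineK k p0 v0" using sub[OF x0] x0e by auto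
  from q2 obtain a b where qab: "q = {a,b}" and ab: "a \<noteq> b" by (meson card_2_iff)
  have "a \<in> lineK k p0 v0" using ql qab by auto
  then obtain t1 where t1: "0 \<le> t1" "t1 \<le> int k - 1"
     and a: "a = (fst p0 + t1 * fst v0, snd p0 + t1 * snd v0)" unfolding lineK_def by blast
  have "b \<in> lineK k p0 v0" using ql qab by auto
  then obtain t2 where t2: "0 \<le> t2" "t2 \<le> int k - 1"
     and b: "b = (fst p0 + t2 * fst v0, snd p0 + t2 * snd v0)" unfolding lineK_def by blast
  define s where "s = t2 - t1"
  have s0: "s \<noteq> 0" using ab a b s_def by auto
  define T where "T = {t::int. 0 \<le> t \<and> t \<le> int k - 1 \<and> 0 \<le> t + s \<and> t + s \<le> int k - 1}"
  have cT: "card T \<le> k - 1"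
  proof (cases "s > 0")
    case True
    have "T \<subseteq> {0..int k - 2}" using True unfolding T_def by auto
    hence "card T \<le> card {0..int k - 2}" by (intro card_mono) auto
    thus ?thesis by simp
  next
    case False
    hence "s < 0" using s0 by simp
    hence "T \<subseteq> {1..int k - 1}" unfolding T_def by auto
    hence "card T \<le> card {1..int k - 1}" by (intro card_mono) auto
    thus ?thesis by simp
  qed
  have finT: "finite T" unfolding T_def by (rule finite_subset[of _ "{0..int k - 1}"]) auto
  define f where "f = (\<lambda>t::int. ((fst a - t * fst v0, snd a - t * snd v0), v0))"
  have "D \<subseteq> f ` T"
  proof
    fix x assume xD: "x \<in> D"
    obtain p v where xe: "x = (p, v)" by (cases x)
    have v: "v \<in> kdirs" and ql': "q \<subseteq> lineK k p v" using sub[OF xD] xe by auto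
    have "a \<in> lineK k p v" using ql' qab by auto
    then obtain u1 where u1: "0 \<le> u1" "u1 \<le> int k - 1"
       and a': "a = (fst p + u1 * fst v, snd p + u1 * snd v)" unfolding lineK_def by blast
    have "b \<in> lineK k p v" using ql' qab by auto
    then obtain u2 where u2: "0 \<le> u2" "u2 \<le> int k - 1"
       and b': "b = (fst p + u2 * fst v, snd p + u2 * snd v)" unfolding lineK_def by blast
    have f1: "fst b - fst a = s * fst v0" "snd b - snd a = s * snd v0"
      using a b by (simp_all add: s_def algebra_simps)
    have f2: "fst b - fst a = (u2 - u1) * fst v" "snd b - snd a = (u2 - u1) * snd v"
      using a' b' by (simp_all add: algebra_simps)
    have e1: "s * fst v0 = (u2 - u1) * fst v" using f1 f2 by simp
    have e2: "s * snd v0 = (u2 - u1) * snd v" using f1 f2 by simp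
    from key_dir[OF v0 v s0 e1 e2] have vv: "v0 = v" and uu: "u2 - u1 = s" by auto
    have "u1 \<in> T" using u1 u2 uu unfolding T_def by auto
    moreover have "x = f u1" using xe a' vv unfolding f_def by auto
    ultimately show "x \<in> f ` T" by blast
  qed
  hence "card D \<le> card (f ` T)" using finT by (intro card_mono) auto
  also have "\<dots> \<le> card T" using finT by (rule card_image_le)
  finally show ?thesis using cT by simp
qed

theorem mainTheorem5:
  fixes k :: nat
  assumes "k \<ge> 2"
    and "breaker_has_pairing_strategy (UNIV :: (int \<times> int) set) (k_in_a_row_edges k)"
  shows "k \<ge> 9"
proof (rule ccontr)
  assume "\<not> k \<ge> 9"
  hence k8: "k \<le> 8" by simp
  obtain P where WP: "winning_pairing_strategy UNIV (k_in_a_row_edges k) P"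
    using assms(2) unfolding breaker_has_pairing_strategy_def by blast
  have P2: "\<And>p. p \<in> P \<Longrightarrow> card p = 2" and Pdisj: "\<And>p q. p \<in> P \<Longrightarrow> q \<in> P \<Longrightarrow> p \<noteq> q \<Longrightarrow> p \<inter> q = {}"
    and Pcov: "\<And>e. e \<in> k_in_a_row_edges k \<Longrightarrow> \<exists>p\<in>P. p \<subseteq> e"
    using WP unfolding winning_pairing_strategy_def by auto
  define K where "K = int k"
  define B where "B = {0..<300::int} \<times> {0..<300::int}"
  define D where "D = B \<times> kdirs"
  define C where "C = {-K..<300+K} \<times> {-K..<300+K}"
  define g where "g = (\<lambda>x. SOME q. q \<in> P \<and> q \<subseteq> lineK k (fst x) (snd x))"
  have gP: "g x \<in> P \<and> g x \<subseteq> lineK k (fst x) (snd x)" if "x \<in> D" for x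
  proof -
    have "snd x \<in> kdirs" using that unfolding D_def by auto
    hence "\<exists>q. q \<in> P \<and> q \<subseteq> lineK k (fst x) (snd x)" using Pcov[OF lineK_edge] by blast
    thus ?thesis unfolding g_def by (rule someI_ex)
  qed
  have lineC: "lineK k (fst x) (snd x) \<subseteq> C" if "x \<in> D" for x
  proof
    fix y assume "y \<in> lineK k (fst x) (snd x)"
    then obtain t where t: "0 \<le> t" "t \<le> int k - 1"
      and y: "y = (fst (fst x) + t * fst (snd x), snd (fst x) + t * snd (snd x))"
      unfolding lineK_def by blast
    have v: "0 \<le> fst (snd x) \<and> fst (snd x) \<le> 1 \<and> -1 \<le> snd (snd x) \<and> snd (snd x) \<le> 1"
      using that kdirs_bound unfolding D_def by auto
    have p: "fst (fst x) \<in> {0..<300} \<and> snd (fst x) \<in> {0..<300}" using that unfolding D_def B_def by auto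
    have "0 \<le> t * fst (snd x) \<and> t * fst (snd x) \<le> t" using v t
      by (metis mult_left_mono mult_nonneg_nonneg mult.right_neutral)
    moreover have "-t \<le> t * snd (snd x) \<and> t * snd (snd x) \<le> t" using v t
      by (metis abs_le_iff abs_mult abs_of_nonneg mult_left_le abs_le_D1 minus_le_iff)
    ultimately show "y \<in> C" using y p t unfolding C_def K_def by auto
  qed
  define P' where "P' = {q \<in> P. q \<subseteq> C}"
  have finC: "finite C" unfolding C_def by simp
  have finP': "finite P'"
    by (rule finite_subset[of _ "Pow C"]) (auto simp: P'_def finC)
  have "card (\<Union>P') = sum card P'"
    by (rule card_Union_disjoint) (auto simp: finP' pairwise_def disjnt_def P'_def Pdisj
        intro: finite_subset[OF _ finC])
  also have "\<dots> = 2 * card P'" using P2 by (simp add: P'_def)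
  finally have cU: "card (\<Union>P') = 2 * card P'" .
  have "card (\<Union>P') \<le> card C" by (rule card_mono[OF finC]) (auto simp: P'_def)
  moreover have "card C = nat (2*K + 300) * nat (2*K + 300)" unfolding C_def
    by (simp add: card_cartesian_product)
  moreover have "nat (2*K + 300) \<le> 316" using k8 unfolding K_def by simp
  hence "nat (2*K + 300) * nat (2*K + 300) \<le> 316 * 316" using mult_le_mono by blast
  ultimately have "2 * card P' \<le> 316 * 316" using cU by linarith
  hence cP': "card P' \<le> 49928" by simp
  have gD: "g ` D \<subseteq> P'"
  proof
    fix q assume "q \<in> g ` D"
    then obtain x where x: "x \<in> D" "q = g x" by blast
    show "q \<in> P'" using gP[OF x(1)] lineC[OF x(1)] x(2) unfolding P'_def by auto
  qed
  have finD: "finite D" unfolding D_def B_def using finite_kdirs by simp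
  have cD: "card D = 360000" unfolding D_def B_def
    by (simp add: card_cartesian_product card_kdirs)
  have eqD: "D = (\<Union>q\<in>g ` D. {x \<in> D. g x = q})" by auto
  have cD1: "card D = card (\<Union>q\<in>g ` D. {x \<in> D. g x = q})" using eqD by (rule arg_cong)
  have cD2: "card (\<Union>q\<in>g ` D. {x \<in> D. g x = q}) \<le> (\<Sum>q\<in>g ` D. card {x \<in> D. g x = q})"
    by (rule card_UN_le) (simp add: finD)
  have "card D \<le> (\<Sum>q\<in>g ` D. card {x \<in> D. g x = q})" using cD1 cD2 by linarith
  also have "\<dots> \<le> (\<Sum>q\<in>g ` D. k - 1)"
  proof (rule sum_mono)
    fix q assume q: "q \<in> g ` D"
    show "card {x \<in> D. g x = q} \<le> k - 1"
    proof (rule fiber_bound)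
      show "card q = 2" using q gP P2 by blast
      show "finite {x \<in> D. g x = q}" using finD by simp
      fix x assume "x \<in> {x \<in> D. g x = q}"
      hence xD: "x \<in> D" and gx: "g x = q" by auto
      have "snd x \<in> kdirs" using xD unfolding D_def by auto
      thus "snd x \<in> kdirs \<and> q \<subseteq> lineK k (fst x) (snd x)" using gP[OF xD] gx by auto
    qed
  qed
  also have "\<dots> = card (g ` D) * (k - 1)" by simp
  also have "\<dots> \<le> card P' * (k - 1)"
    using gD finP' by (intro mult_right_mono card_mono) auto
  also have "\<dots> \<le> 49928 * 7" using cP' k8 by (intro mult_mono) auto
  finally show False using cD by simp
qed

end
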